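(* (a) Let $\lambda=(n^m)$ be a rectangle and $1\le c\le n-1$. Then the total number of pairs $(T,u)$ with $T$ a standard Young tableau of shape $[\lambda]$ and $(T,u)$ a horizontal adjacency in column $c$ equals $f_\lambda$. (b) Let $\lambda$ be a strict partition with $\lambda_i=\lambda_1-i+1$ for all $1\le i\le\ell(\lambda)$ (a shifted rectangle) and $1\le c\le\lambda_1-1$. Then the total number of pairs $(T,u)$ with $T$ a shifted standard Young tableau of shape $[\lambda]^{\mathrm{sh}}$ and $(T,u)$ a horizontal adjacency in column $c$ equals $g^\lambda$.
   Context: Matrix coordinates. $[\lambda]=\{(i,j):i\in[\ell],j\in[\lambda_i]\}$; for strict $\lambda$, $[\lambda]^{\mathrm{sh}}=\{(i,j+i-1):i\in[\ell],j\in[\lambda_i]\}$. (Shifted) standard Young tableaux are bijections from the cell set to $[|\lambda|]$ increasing along rows and columns; $f_\lambda$ counts standard Young tableaux of shape $[\lambda]$ and $g^\lambda$ counts shifted ones of shape $[\lambda]^{\mathrm{sh}}$. For $u=(i,j)$ in the cell set $D$, $(T,u)$ is a horizontal adjacency if $(i,j+1)\in D$ and $T(i,j+1)=T(u)+1$; it lies in column $j$. *)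

theory Defs
  imports Main
begin

text \<open>Partitions are lists of positive naturals, weakly decreasing; cells are
 1-indexed matrix coordinates (row, column).\<close>

definition young_diagram :: "nat list \<Rightarrow> (nat \<times> nat) set" where
  "young_diagram lam = {(i, j). 1 \<le> i \<and> i \<le> length lam \<and> 1 \<le> j \<and> j \<le> lam ! (i - 1)}"

definition shifted_diagram :: "nat list \<Rightarrow> (nat \<times> nat) set" where
  "shifted_diagram lam = {(i, j + i - 1) | i j. 1 \<le> i \<and> i \<le> length lam \<and> 1 \<le> j \<and> j \<le> lam ! (i - 1)}"

definition strict_partition :: "nat list \<Rightarrow> bool" where
  "strict_partition lam \<longleftrightarrow> sorted_wrt (>) lam \<and> (\<forall>x\<in>set lam. 0 < x)"

text \<open>A standard tableau on a cell set D: a bijection D -> {1..|D|}, increasing along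
 rows and columns; normalised to 0 outside D so that tableaux form a finite set.\<close>
definition is_std_tableau :: "(nat \<times> nat) set \<Rightarrow> (nat \<times> nat \<Rightarrow> nat) \<Rightarrow> bool" where
  "is_std_tableau D T \<longleftrightarrow>
     bij_betw T D {1..card D} \<and>
     (\<forall>i j. (i, j) \<in> D \<and> (i, j + 1) \<in> D \<longrightarrow> T (i, j) < T (i, j + 1)) \<and>
     (\<forall>i j. (i, j) \<in> D \<and> (i + 1, j) \<in> D \<longrightarrow> T (i, j) < T (i + 1, j)) \<and>
     (\<forall>x. x \<notin> D \<longrightarrow> T x = 0)"

definition std_tableaux :: "(nat \<times> nat) set \<Rightarrow> (nat \<times> nat \<Rightarrow> nat) set" where
  "std_tableaux D = {T. is_std_tableau D T}"

definition f_count :: "nat list \<Rightarrow> nat" where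
  "f_count lam = card (std_tableaux (young_diagram lam))"

definition g_count :: "nat list \<Rightarrow> nat" where
  "g_count lam = card (std_tableaux (shifted_diagram lam))"

definition horiz_adj :: "(nat \<times> nat) set \<Rightarrow> (nat \<times> nat \<Rightarrow> nat) \<Rightarrow> nat \<times> nat \<Rightarrow> bool" where
  "horiz_adj D T u \<longleftrightarrow> u \<in> D \<and> (fst u, snd u + 1) \<in> D \<and> T (fst u, snd u + 1) = T u + 1"

definition adj_in_column :: "(nat \<times> nat) set \<Rightarrow> nat \<Rightarrow> ((nat \<times> nat \<Rightarrow> nat) \<times> (nat \<times> nat)) set" where
  "adj_in_column D c = {(T, u). T \<in> std_tableaux D \<and> horiz_adj D T u \<and> snd u = c}"

end

theory Submission
  imports Defs
begin

definition sw :: "nat \<Rightarrow> nat \<Rightarrow> nat" where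
  "sw k v = (if v = k then Suc k else if v = Suc k then k else v)"

lemma sw_sw[simp]: "sw k (sw k v) = v" by (simp add: sw_def)

lemma sw_less: "u < v \<Longrightarrow> \<not> (u = k \<and> v = Suc k) \<Longrightarrow> sw k u < sw k v"
  by (auto simp: sw_def)

lemma sw_eq_k: "sw k v = k \<longleftrightarrow> v = Suc k" by (auto simp: sw_def)
lemma sw_eq_Suc: "sw k v = Suc k \<longleftrightarrow> v = k" by (auto simp: sw_def)

lemma std_D: "T \<in> std_tableaux D \<Longrightarrow> is_std_tableau D T"
  by (simp add: std_tableaux_def)

lemma std_bij: "T \<in> std_tableaux D \<Longrightarrow> bij_betw T D {1..card D}"
  by (drule std_D, unfold is_std_tableau_def) (erule conjunct1)

lemma std_row0: "T \<in> std_tableaux D \<Longrightarrow> (\<forall>i j. (i, j) \<in> D \<and> (i, j + 1) \<in> D \<longrightarrow> T (i, j) < T (i, j + 1))"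
  by (drule std_D, unfold is_std_tableau_def) (erule conjunct1[OF conjunct2])

lemma std_col0: "T \<in> std_tableaux D \<Longrightarrow> (\<forall>i j. (i, j) \<in> D \<and> (i + 1, j) \<in> D \<longrightarrow> T (i, j) < T (i + 1, j))"
  by (drule std_D, unfold is_std_tableau_def) (erule conjunct1[OF conjunct2[OF conjunct2]])

lemma std_out0: "T \<in> std_tableaux D \<Longrightarrow> (\<forall>x. x \<notin> D \<longrightarrow> T x = 0)"
  by (drule std_D, unfold is_std_tableau_def) (erule conjunct2[OF conjunct2[OF conjunct2]])

lemma std_val: "T \<in> std_tableaux D \<Longrightarrow> y \<in> D \<Longrightarrow> T y \<in> {1..card D}"
  by (rule bij_betw_apply[OF std_bij])

lemma std_out: "T \<in> std_tableaux D \<Longrightarrow> y \<notin> D \<Longrightarrow> T y = 0"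
  using std_out0 by blast

lemma std_inj: "T \<in> std_tableaux D \<Longrightarrow> inj_on T D"
  using std_bij bij_betw_def by blast

lemma std_surj: "T \<in> std_tableaux D \<Longrightarrow> v \<in> {1..card D} \<Longrightarrow> \<exists>y\<in>D. T y = v"
proof -
  assume T: "T \<in> std_tableaux D" and v: "v \<in> {1..card D}"
  have "T ` D = {1..card D}" using std_bij[OF T] by (simp add: bij_betw_def)
  then show ?thesis using v by (metis imageE)
qed

lemma std_row: "T \<in> std_tableaux D \<Longrightarrow> (i,j) \<in> D \<Longrightarrow> (i, Suc j) \<in> D \<Longrightarrow> T (i,j) < T (i, Suc j)"
  using std_row0[of T D] by simp

lemma std_col: "T \<in> std_tableaux D \<Longrightarrow> (i,j) \<in> D \<Longrightarrow> (Suc i, j) \<in> D \<Longrightarrow> T (i,j) < T (Suc i, j)"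
  using std_col0[of T D] by simp

lemma finite_std: "finite D \<Longrightarrow> finite (std_tableaux D)"
proof -
  assume f: "finite D"
  have "std_tableaux D \<subseteq> {g. \<forall>x. (x \<in> D \<longrightarrow> g x \<in> {0..card D}) \<and> (x \<notin> D \<longrightarrow> g x = 0)}"
    using std_val std_out by fastforce
  moreover have "finite {g. \<forall>x. (x \<in> D \<longrightarrow> g x \<in> {0..card D}) \<and> (x \<notin> D \<longrightarrow> g x = (0::nat))}"
    by (rule finite_set_of_finite_funs) (use f in auto)
  ultimately show ?thesis by (rule finite_subset)
qed

lemma swap_std:
  assumes T: "T \<in> std_tableaux D" and p: "p \<in> D" and q: "q \<in> D"
    and Tp: "T p = k" and Tq: "T q = Suc k"
    and nr: "q \<noteq> (fst p, Suc (snd p))" and nb: "q \<noteq> (Suc (fst p), snd p)"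
  shows "(\<lambda>y. sw k (T y)) \<in> std_tableaux D"
proof -
  have k1: "1 \<le> k" and kN: "Suc k \<le> card D" using std_val[OF T p] std_val[OF T q] Tp Tq by auto
  have bsw: "bij_betw (sw k) {1..card D} {1..card D}"
    by (rule bij_betw_byWitness[where f'="sw k"]) (use k1 kN in \<open>auto simp: sw_def\<close>)
  have bT: "bij_betw T D {1..card D}" using std_bij[OF T] .
  have b: "bij_betw (\<lambda>y. sw k (T y)) D {1..card D}"
    using bij_betw_trans[OF bT bsw] by (simp add: comp_def)
  have inj: "inj_on T D" by (rule std_inj[OF T])
  have row: "\<forall>i j. (i, j) \<in> D \<and> (i, j + 1) \<in> D \<longrightarrow> sw k (T (i, j)) < sw k (T (i, j + 1))"
  proof (intro allI impI)
    fix i j assume a: "(i, j) \<in> D \<and> (i, j + 1) \<in> D"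
    have lt: "T (i,j) < T (i, j+1)" using std_row[OF T] a by auto
    have "\<not> (T (i,j) = k \<and> T (i,j+1) = Suc k)"
    proof
      assume h: "T (i,j) = k \<and> T (i,j+1) = Suc k"
      then have "(i,j) = p" using inj a p Tp by (metis inj_on_eq_iff)
      moreover have "(i,j+1) = q" using h inj a q Tq by (metis inj_on_eq_iff)
      ultimately show False using nr by auto
    qed
    then show "sw k (T (i, j)) < sw k (T (i, j + 1))" using sw_less lt by blast
  qed
  have col: "\<forall>i j. (i, j) \<in> D \<and> (i + 1, j) \<in> D \<longrightarrow> sw k (T (i, j)) < sw k (T (i + 1, j))"
  proof (intro allI impI)
    fix i j assume a: "(i, j) \<in> D \<and> (i + 1, j) \<in> D"
    have lt: "T (i,j) < T (i+1, j)" using std_col[OF T] a by auto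
    have "\<not> (T (i,j) = k \<and> T (i+1,j) = Suc k)"
    proof
      assume h: "T (i,j) = k \<and> T (i+1,j) = Suc k"
      then have "(i,j) = p" using inj a p Tp by (metis inj_on_eq_iff)
      moreover have "(i+1,j) = q" using h inj a q Tq by (metis inj_on_eq_iff)
      ultimately show False using nb by auto
    qed
    then show "sw k (T (i, j)) < sw k (T (i+1, j))" using sw_less lt by blast
  qed
  have out: "\<forall>x. x \<notin> D \<longrightarrow> sw k (T x) = 0" using std_out[OF T] k1 by (auto simp: sw_def)
  have "is_std_tableau D (\<lambda>y. sw k (T y))" unfolding is_std_tableau_def using b row col out by (intro conjI)
  then show ?thesis by (simp add: std_tableaux_def)
qed

definition vert_adj :: "(nat \<times> nat) set \<Rightarrow> (nat \<times> nat \<Rightarrow> nat) \<Rightarrow> nat \<times> nat \<Rightarrow> bool" where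
  "vert_adj D T u \<longleftrightarrow> u \<in> D \<and> (Suc (fst u), snd u) \<in> D \<and> T (Suc (fst u), snd u) = T u + 1"


lemma key_in:
  assumes fin: "finite D" and x: "(i,j) \<in> D" and i: "1 \<le> i" and j: "1 \<le> j"
  shows "card {T\<in>std_tableaux D. T (i,j) = card D} + card {T\<in>std_tableaux D. horiz_adj D T (i,j)}
           + card {T\<in>std_tableaux D. vert_adj D T (i,j)}
       = card {T\<in>std_tableaux D. T (i,j) = 1} + card {T\<in>std_tableaux D. horiz_adj D T (i,j-1)}
           + card {T\<in>std_tableaux D. vert_adj D T (i-1,j)}"
proof -
  define S where "S = std_tableaux D"
  define N where "N = card D"
  have finS: "finite S" unfolding S_def using finite_std[OF fin] .
  have jj: "Suc (j - 1) = j" and ii: "Suc (i - 1) = i" using i j by auto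
  define P where "P = {T\<in>S. T (i,j) \<noteq> N \<and> \<not> horiz_adj D T (i,j) \<and> \<not> vert_adj D T (i,j)}"
  define Q where "Q = {T\<in>S. T (i,j) \<noteq> 1 \<and> \<not> horiz_adj D T (i,j-1) \<and> \<not> vert_adj D T (i-1,j)}"
  have c1: "card S = card {T\<in>S. T (i,j) = N} + (card {T\<in>S. horiz_adj D T (i,j)}
           + (card {T\<in>S. vert_adj D T (i,j)} + card P))"
  proof -
    have e: "S = {T\<in>S. T (i,j) = N} \<union> ({T\<in>S. horiz_adj D T (i,j)} \<union> ({T\<in>S. vert_adj D T (i,j)} \<union> P))"
      unfolding P_def by blast
    have d1: "{T\<in>S. horiz_adj D T (i,j)} \<inter> ({T\<in>S. vert_adj D T (i,j)} \<union> P) = {}"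
    proof -
      { fix T assume T: "T \<in> S" and h: "horiz_adj D T (i,j)" and v: "vert_adj D T (i,j)"
        have hh: "(i, Suc j) \<in> D" "(Suc i, j) \<in> D" "T (i, Suc j) = T (Suc i, j)"
          using h v unfolding horiz_adj_def vert_adj_def by auto
        have "(i, Suc j) = (Suc i, j)"
          using inj_onD[OF std_inj[OF T[unfolded S_def]] hh(3) hh(1) hh(2)] .
        then have False by simp }
      then show ?thesis unfolding P_def by blast
    qed
    have d2: "{T\<in>S. T (i,j) = N} \<inter> ({T\<in>S. horiz_adj D T (i,j)} \<union> ({T\<in>S. vert_adj D T (i,j)} \<union> P)) = {}"
    proof -
      { fix T assume T: "T \<in> S" and e: "T (i,j) = N" and h: "horiz_adj D T (i,j) \<or> vert_adj D T (i,j)"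
        have False
        proof (cases "horiz_adj D T (i,j)")
          case True
          then have "(i, Suc j) \<in> D" "T (i, Suc j) = N + 1" using e unfolding horiz_adj_def by auto
          then show False using std_val[OF T[unfolded S_def]] unfolding N_def by force
        next
          case False
          then have "vert_adj D T (i,j)" using h by blast
          then have "(Suc i, j) \<in> D" "T (Suc i, j) = N + 1" using e unfolding vert_adj_def by auto
          then show False using std_val[OF T[unfolded S_def]] unfolding N_def by force
        qed }
      then show ?thesis unfolding P_def by blast
    qed
    have d3: "{T\<in>S. vert_adj D T (i,j)} \<inter> P = {}" unfolding P_def by blast
    have "card S = card {T\<in>S. T (i,j) = N} + card ({T\<in>S. horiz_adj D T (i,j)} \<union> ({T\<in>S. vert_adj D T (i,j)} \<union> P))"
      by (subst e, rule card_Un_disjoint) (use finS d2 P_def Q_def in auto)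
    also have "card ({T\<in>S. horiz_adj D T (i,j)} \<union> ({T\<in>S. vert_adj D T (i,j)} \<union> P))
       = card {T\<in>S. horiz_adj D T (i,j)} + card ({T\<in>S. vert_adj D T (i,j)} \<union> P)"
      by (rule card_Un_disjoint) (use finS d1 P_def in auto)
    also have "card ({T\<in>S. vert_adj D T (i,j)} \<union> P) = card {T\<in>S. vert_adj D T (i,j)} + card P"
      by (rule card_Un_disjoint) (use finS d3 P_def in auto)
    finally show ?thesis .
  qed
  have c2: "card S = card {T\<in>S. T (i,j) = 1} + (card {T\<in>S. horiz_adj D T (i,j-1)}
           + (card {T\<in>S. vert_adj D T (i-1,j)} + card Q))"
  proof -
    have e: "S = {T\<in>S. T (i,j) = 1} \<union> ({T\<in>S. horiz_adj D T (i,j-1)} \<union> ({T\<in>S. vert_adj D T (i-1,j)} \<union> Q))"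
      unfolding Q_def by blast
    have d1: "{T\<in>S. horiz_adj D T (i,j-1)} \<inter> ({T\<in>S. vert_adj D T (i-1,j)} \<union> Q) = {}"
    proof -
      { fix T assume T: "T \<in> S" and h: "horiz_adj D T (i,j-1)" and v: "vert_adj D T (i-1,j)"
        have hh: "(i, j-1) \<in> D" "(i-1, j) \<in> D" "T (i, j-1) = T (i-1, j)"
          using h v i j unfolding horiz_adj_def vert_adj_def by (auto simp: ii jj)
        have "(i, j-1) = (i-1, j)"
          using inj_onD[OF std_inj[OF T[unfolded S_def]] hh(3) hh(1) hh(2)] .
        then have False using i by auto }
      then show ?thesis unfolding Q_def by blast
    qed
    have d2: "{T\<in>S. T (i,j) = 1} \<inter> ({T\<in>S. horiz_adj D T (i,j-1)} \<union> ({T\<in>S. vert_adj D T (i-1,j)} \<union> Q)) = {}"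
    proof -
      { fix T assume T: "T \<in> S" and e: "T (i,j) = 1"
        have "\<not> horiz_adj D T (i,j-1)"
        proof
          assume h: "horiz_adj D T (i,j-1)"
          then have "(i,j-1) \<in> D" "T (i,j) = T (i,j-1) + 1" using j unfolding horiz_adj_def by (auto simp: jj)
          then show False using std_val[OF T[unfolded S_def]] e by fastforce
        qed
        moreover have "\<not> vert_adj D T (i-1,j)"
        proof
          assume h: "vert_adj D T (i-1,j)"
          then have "(i-1,j) \<in> D" "T (i,j) = T (i-1,j) + 1" using i unfolding vert_adj_def by (auto simp: ii)
          then show False using std_val[OF T[unfolded S_def]] e by fastforce
        qed
        ultimately have "\<not> horiz_adj D T (i,j-1) \<and> \<not> vert_adj D T (i-1,j)" by blast }
      then show ?thesis unfolding Q_def by blast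
    qed
    have d3: "{T\<in>S. vert_adj D T (i-1,j)} \<inter> Q = {}" unfolding Q_def by blast
    have "card S = card {T\<in>S. T (i,j) = 1} + card ({T\<in>S. horiz_adj D T (i,j-1)} \<union> ({T\<in>S. vert_adj D T (i-1,j)} \<union> Q))"
      by (subst e, rule card_Un_disjoint) (use finS d2 P_def Q_def in auto)
    also have "card ({T\<in>S. horiz_adj D T (i,j-1)} \<union> ({T\<in>S. vert_adj D T (i-1,j)} \<union> Q))
       = card {T\<in>S. horiz_adj D T (i,j-1)} + card ({T\<in>S. vert_adj D T (i-1,j)} \<union> Q)"
      by (rule card_Un_disjoint) (use finS d1 Q_def in auto)
    also have "card ({T\<in>S. vert_adj D T (i-1,j)} \<union> Q) = card {T\<in>S. vert_adj D T (i-1,j)} + card Q"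
      by (rule card_Un_disjoint) (use finS d3 Q_def in auto)
    finally show ?thesis .
  qed
  define \<phi> where "\<phi> = (\<lambda>T y. sw (T (i,j)) (T y))"
  define \<psi> where "\<psi> = (\<lambda>T y. sw (T (i,j) - 1) (T y))"
  have PQ: "\<phi> T \<in> Q" if T: "T \<in> P" for T
  proof -
    have TS: "T \<in> std_tableaux D" using T unfolding P_def S_def by blast
    define k where "k = T (i,j)"
    have kv: "k \<in> {1..N}" using std_val[OF TS x] unfolding k_def N_def .
    have kN: "k \<noteq> N" using T unfolding P_def k_def by blast
    obtain q where q: "q \<in> D" "T q = Suc k" using std_surj[OF TS, of "Suc k"] kv kN unfolding N_def by auto
    have nr: "q \<noteq> (i, Suc j)" using T q x unfolding P_def horiz_adj_def k_def by auto
    have nb: "q \<noteq> (Suc i, j)" using T q x unfolding P_def vert_adj_def k_def by auto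
    have S': "\<phi> T \<in> S" unfolding \<phi>_def S_def
      using swap_std[OF TS x q(1) refl q(2)[unfolded k_def]] nr nb by simp
    have v: "\<phi> T (i,j) = Suc k" unfolding \<phi>_def k_def by (simp add: sw_def)
    have nh: "\<not> horiz_adj D (\<phi> T) (i,j-1)"
    proof
      assume h: "horiz_adj D (\<phi> T) (i,j-1)"
      then have l: "(i,j-1) \<in> D" and "\<phi> T (i,j) = \<phi> T (i,j-1) + 1"
        unfolding horiz_adj_def using j by (auto simp: jj)
      then have "sw k (T (i,j-1)) = k" using v unfolding \<phi>_def k_def by simp
      then have "T (i,j-1) = Suc k" by (simp add: sw_eq_k)
      moreover have "T (i,j-1) < T (i,j)" using std_row[OF TS l] x unfolding jj by simp
      ultimately show False unfolding k_def by simp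
    qed
    have nv: "\<not> vert_adj D (\<phi> T) (i-1,j)"
    proof
      assume h: "vert_adj D (\<phi> T) (i-1,j)"
      then have l: "(i-1,j) \<in> D" and "\<phi> T (i,j) = \<phi> T (i-1,j) + 1"
        unfolding vert_adj_def using i by (auto simp: ii)
      then have "sw k (T (i-1,j)) = k" using v unfolding \<phi>_def k_def by simp
      then have "T (i-1,j) = Suc k" by (simp add: sw_eq_k)
      moreover have "T (i-1,j) < T (i,j)" using std_col[OF TS l] x unfolding ii by simp
      ultimately show False unfolding k_def by simp
    qed
    show ?thesis unfolding Q_def using S' v nh nv kv by auto
  qed
  have QP: "\<psi> T \<in> P" if T: "T \<in> Q" for T
  proof -
    have TS: "T \<in> std_tableaux D" using T unfolding Q_def S_def by blast
    define k where "k = T (i,j) - 1"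
    have kv: "T (i,j) \<in> {1..N}" using std_val[OF TS x] unfolding N_def .
    have k1: "T (i,j) \<noteq> 1" using T unfolding Q_def by blast
    have Tx: "T (i,j) = Suc k" using kv k1 unfolding k_def by auto
    obtain p where p: "p \<in> D" "T p = k" using std_surj[OF TS, of k] kv k1 Tx unfolding N_def by auto
    have nr: "(i,j) \<noteq> (fst p, Suc (snd p))"
    proof
      assume e: "(i,j) = (fst p, Suc (snd p))"
      then have "p = (i, j-1)" by (cases p) auto
      then have "horiz_adj D T (i,j-1)" using p x Tx unfolding horiz_adj_def using j by (auto simp: jj)
      then show False using T unfolding Q_def by blast
    qed
    have nb: "(i,j) \<noteq> (Suc (fst p), snd p)"
    proof
      assume e: "(i,j) = (Suc (fst p), snd p)"
      then have "p = (i-1, j)" by (cases p) auto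
      then have "vert_adj D T (i-1,j)" using p x Tx unfolding vert_adj_def using i by (auto simp: ii)
      then show False using T unfolding Q_def by blast
    qed
    have S': "\<psi> T \<in> S" unfolding \<psi>_def S_def
      using swap_std[OF TS p(1) x p(2) Tx nr nb] unfolding k_def by simp
    have v: "\<psi> T (i,j) = k" unfolding \<psi>_def using Tx k_def by (simp add: sw_def)
    have kN: "k \<noteq> N" using kv Tx by auto
    have nh: "\<not> horiz_adj D (\<psi> T) (i,j)"
    proof
      assume h: "horiz_adj D (\<psi> T) (i,j)"
      then have l: "(i,Suc j) \<in> D" and "\<psi> T (i,Suc j) = Suc k"
        unfolding horiz_adj_def using v by auto
      then have "sw k (T (i,Suc j)) = Suc k" unfolding \<psi>_def k_def by simp
      then have "T (i,Suc j) = k" by (simp add: sw_eq_Suc)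
      moreover have "T (i,j) < T (i,Suc j)" using std_row[OF TS x l] .
      ultimately show False using Tx by simp
    qed
    have nv: "\<not> vert_adj D (\<psi> T) (i,j)"
    proof
      assume h: "vert_adj D (\<psi> T) (i,j)"
      then have l: "(Suc i, j) \<in> D" and "\<psi> T (Suc i, j) = Suc k"
        unfolding vert_adj_def using v by auto
      then have "sw k (T (Suc i, j)) = Suc k" unfolding \<psi>_def k_def by simp
      then have "T (Suc i, j) = k" by (simp add: sw_eq_Suc)
      moreover have "T (i,j) < T (Suc i, j)" using std_col[OF TS x l] .
      ultimately show False using Tx by simp
    qed
    show ?thesis unfolding P_def using S' v nh nv kN by auto
  qed
  have inv1: "\<psi> (\<phi> T) = T" for T
  proof -
    have e: "\<phi> T (i,j) - 1 = T (i,j)" unfolding \<phi>_def by (simp add: sw_def)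
    show ?thesis unfolding \<psi>_def e by (simp add: \<phi>_def)
  qed
  have inv2: "\<phi> (\<psi> T) = T" if "T \<in> Q" for T
  proof -
    have TS: "T \<in> std_tableaux D" using that unfolding Q_def S_def by blast
    have "T (i,j) \<noteq> 0" using std_val[OF TS x] by auto
    moreover have "T (i,j) \<noteq> 1" using that unfolding Q_def by blast
    ultimately have "\<psi> T (i,j) = T (i,j) - 1" unfolding \<psi>_def by (auto simp: sw_def)
    then show ?thesis unfolding \<phi>_def \<psi>_def by simp
  qed
  have "bij_betw \<phi> P Q"
    by (rule bij_betw_byWitness[where f'=\<psi>]) (use inv1 inv2 PQ QP in auto)
  then have "card P = card Q" by (rule bij_betw_same_card)
  then show ?thesis using c1 c2 unfolding S_def N_def by linarith
qed


lemma tele: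
  fixes f :: "nat \<Rightarrow> nat" and R :: nat
  shows "f 0 = 0 \<Longrightarrow> (\<Sum>i=1..R. f (i - 1)) + f R = (\<Sum>i=1..R. f i)"
  by (induction R) auto

lemma key_all:
  assumes fin: "finite D" and ne: "D \<noteq> {}" and i: "1 \<le> i" and j: "1 \<le> j"
  shows "card {T\<in>std_tableaux D. T (i,j) = card D} + card {T\<in>std_tableaux D. horiz_adj D T (i,j)}
           + card {T\<in>std_tableaux D. vert_adj D T (i,j)}
       = card {T\<in>std_tableaux D. T (i,j) = 1} + card {T\<in>std_tableaux D. horiz_adj D T (i,j-1)}
           + card {T\<in>std_tableaux D. vert_adj D T (i-1,j)}"
proof (cases "(i,j) \<in> D")
  case True
  then show ?thesis using key_in[OF fin True i j] by simp
next
  case False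
  have N: "card D \<noteq> 0" using fin ne by auto
  have jj: "Suc (j - 1) = j" and ii: "Suc (i - 1) = i" using i j by auto
  have z1: "{T\<in>std_tableaux D. T (i,j) = card D} = {}" using N by (force dest: std_out[OF _ False])
  have z2: "{T\<in>std_tableaux D. T (i,j) = 1} = {}" by (force dest: std_out[OF _ False])
  have z3: "{T\<in>std_tableaux D. horiz_adj D T (i,j)} = {}" using False unfolding horiz_adj_def by auto
  have z4: "{T\<in>std_tableaux D. vert_adj D T (i,j)} = {}" using False unfolding vert_adj_def by auto
  have z5: "{T\<in>std_tableaux D. horiz_adj D T (i,j-1)} = {}" using False j by (cases j) (auto simp: horiz_adj_def)
  have z6: "{T\<in>std_tableaux D. vert_adj D T (i-1,j)} = {}" using False i by (cases i) (auto simp: vert_adj_def)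
  show ?thesis unfolding z1 z2 z3 z4 z5 z6 by simp
qed

lemma generic:
  assumes fin: "finite D" and sub: "\<And>i j. (i,j) \<in> D \<Longrightarrow> 1 \<le> i \<and> i \<le> R \<and> 1 \<le> j"
    and a: "(1,1) \<in> D" and bD: "b \<in> D"
    and one: "\<And>T. T \<in> std_tableaux D \<Longrightarrow> T (1,1) = 1"
    and top: "\<And>T. T \<in> std_tableaux D \<Longrightarrow> T b = card D"
    and c: "1 \<le> c" "c < snd b"
  shows "card (adj_in_column D c) = card (std_tableaux D)"
proof -
  define S where "S = std_tableaux D"
  define N where "N = card D"
  have finS: "finite S" unfolding S_def using finite_std[OF fin] .
  have ne: "D \<noteq> {}" using a by auto
  have N0: "N \<noteq> 0" using fin ne unfolding N_def by auto
  have R1: "1 \<le> R" using sub[OF a] by auto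
  define h where "h = (\<lambda>j i. card {T\<in>S. horiz_adj D T (i,j)})"
  define v where "v = (\<lambda>j i. card {T\<in>S. vert_adj D T (i,j)})"
  define e1 where "e1 = (\<lambda>j i. card {T\<in>S. T (i,j) = 1})"
  define eN where "eN = (\<lambda>j i. card {T\<in>S. T (i,j) = N})"
  define H where "H = (\<lambda>j. \<Sum>i=1..R. h j i)"
  have step1: "card (adj_in_column D c) = H c"
  proof -
    have e: "adj_in_column D c = (\<Union>i\<in>{1..R}. (\<lambda>T. (T,(i,c))) ` {T\<in>S. horiz_adj D T (i,c)})"
    proof (rule set_eqI)
      fix z
      show "z \<in> adj_in_column D c \<longleftrightarrow> z \<in> (\<Union>i\<in>{1..R}. (\<lambda>T. (T,(i,c))) ` {T\<in>S. horiz_adj D T (i,c)})"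
      proof
        assume "z \<in> adj_in_column D c"
        then obtain T u where z: "z = (T,u)" "T \<in> S" "horiz_adj D T u" "snd u = c"
          unfolding adj_in_column_def S_def by blast
        then have "u \<in> D" unfolding horiz_adj_def by blast
        then have "fst u \<in> {1..R}" using sub[of "fst u" "snd u"] by auto
        moreover have "u = (fst u, c)" using z(4) by (cases u) auto
        ultimately show "z \<in> (\<Union>i\<in>{1..R}. (\<lambda>T. (T,(i,c))) ` {T\<in>S. horiz_adj D T (i,c)})"
          using z by (metis (mono_tags, lifting) UN_iff image_eqI mem_Collect_eq)
      qed (auto simp: adj_in_column_def S_def)
    qed
    have "card (adj_in_column D c) = (\<Sum>i\<in>{1..R}. card ((\<lambda>T. (T,(i,c))) ` {T\<in>S. horiz_adj D T (i,c)}))"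
      unfolding e by (rule card_UN_disjoint) (use finS in auto)
    also have "\<dots> = H c" unfolding H_def h_def
      by (rule sum.cong) (auto intro!: card_image inj_onI)
    finally show ?thesis .
  qed
  have step2: "(\<Sum>i=1..R. eN j i) + H j = (\<Sum>i=1..R. e1 j i) + H (j - 1)" if j: "1 \<le> j" for j
  proof -
    have "(\<Sum>i=1..R. eN j i + h j i + v j i) = (\<Sum>i=1..R. e1 j i + h (j-1) i + v j (i-1))"
      by (rule sum.cong) (use key_all[OF fin ne _ j] in \<open>auto simp: eN_def h_def v_def e1_def S_def N_def\<close>)
    moreover have "(\<Sum>i=1..R. v j (i - 1)) = (\<Sum>i=1..R. v j i)"
    proof -
      have "(0,j) \<notin> D" using sub by fastforce
      then have "v j 0 = 0" unfolding v_def vert_adj_def by simp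
      moreover have "(Suc R, j) \<notin> D" using sub by fastforce
      then have "v j R = 0" unfolding v_def vert_adj_def by simp
      ultimately show ?thesis using tele[of "v j" R] by simp
    qed
    ultimately show ?thesis unfolding H_def sum.distrib by simp
  qed
  have H0: "H 0 = 0"
  proof -
    have "(i,0) \<notin> D" for i using sub by fastforce
    then show ?thesis unfolding H_def h_def horiz_adj_def by simp
  qed
  have e1v: "e1 j i = (if (i,j) = (1,1) then card S else 0)" for i j
  proof (cases "(i,j) = (1,1)")
    case True
    have "{T\<in>S. T (1,1) = 1} = S" using one S_def by auto
    then show ?thesis unfolding e1_def using True by simp
  next
    case False
    have emp: "{T\<in>S. T (i,j) = 1} = {}"
    proof (rule ccontr)
      assume "{T\<in>S. T (i,j) = 1} \<noteq> {}"
      then obtain T where T: "T \<in> S" "T (i,j) = 1" by blast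
      show False
      proof (cases "(i,j) \<in> D")
        case True
        have "T (i,j) = T (1,1)" using one[OF T(1)[unfolded S_def]] T(2) by simp
        then show False using inj_onD[OF std_inj[OF T(1)[unfolded S_def]] _ True a] False by blast
      next
        case False
        then show False using std_out[OF T(1)[unfolded S_def]] T by simp
      qed
    qed
    show ?thesis unfolding e1_def emp using False by auto
  qed
  have E1: "(\<Sum>i=1..R. e1 j i) = (if j = 1 then card S else 0)" for j
    unfolding e1v using R1 by (simp add: sum.delta)
  have EN: "(\<Sum>i=1..R. eN j i) = 0" if "j < snd b" for j
  proof -
    have "eN j i = 0" for i
    proof -
      have emp: "{T\<in>S. T (i,j) = N} = {}"
      proof (rule ccontr)
        assume "{T\<in>S. T (i,j) = N} \<noteq> {}"
        then obtain T where T: "T \<in> S" "T (i,j) = N" by blast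
        show False
        proof (cases "(i,j) \<in> D")
          case True
          have "T (i,j) = T b" using top[OF T(1)[unfolded S_def]] T(2) unfolding N_def by simp
          then have "(i,j) = b" using inj_onD[OF std_inj[OF T(1)[unfolded S_def]] _ True bD] by blast
          then show False using that by auto
        next
          case False
          then show False using std_out[OF T(1)[unfolded S_def]] T N0 by simp
        qed
      qed
      show ?thesis unfolding eN_def emp by simp
    qed
    then show ?thesis by simp
  qed
  have main: "H j = card S" if "1 \<le> j" "j < snd b" for j
    using that
  proof (induction j)
    case 0 then show ?case by simp
  next
    case (Suc j)
    have st: "(\<Sum>i=1..R. eN (Suc j) i) + H (Suc j) = (\<Sum>i=1..R. e1 (Suc j) i) + H j"
      using step2[of "Suc j"] by simp
    have z: "(\<Sum>i=1..R. eN (Suc j) i) = 0" using EN Suc.prems by blast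
    show ?case
    proof (cases "j = 0")
      case True
      then show ?thesis using st z E1[of "Suc j"] H0 by simp
    next
      case False
      then show ?thesis using st z E1[of "Suc j"] Suc.IH Suc.prems by simp
    qed
  qed
  show ?thesis using step1 main c unfolding S_def by simp
qed


lemma one_at:
  assumes T: "T \<in> std_tableaux D" and fin: "finite D" and a: "(1,1) \<in> D"
    and pred: "\<And>i j. (i,j) \<in> D \<Longrightarrow> (i,j) \<noteq> (1,1) \<Longrightarrow>
        (\<exists>i'. i = Suc i' \<and> (i',j) \<in> D) \<or> (\<exists>j'. j = Suc j' \<and> (i,j') \<in> D)"
  shows "T (1,1) = 1"
proof -
  have "card D \<ge> 1" using fin a by (metis One_nat_def Suc_leI card_gt_0_iff empty_iff)
  then obtain y where y: "y \<in> D" "T y = 1" using std_surj[OF T, of 1] by auto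
  obtain i j where yij: "y = (i,j)" by (cases y)
  have "y = (1,1)"
  proof (rule ccontr)
    assume ne: "y \<noteq> (1,1)"
    from pred[OF y(1)[unfolded yij] ne[unfolded yij]]
    show False
    proof
      assume "\<exists>i'. i = Suc i' \<and> (i',j) \<in> D"
      then obtain i' where "i = Suc i'" "(i',j) \<in> D" by blast
      then show False using std_col[OF T, of i' j] std_val[OF T, of "(i',j)"] y yij by auto
    next
      assume "\<exists>j'. j = Suc j' \<and> (i,j') \<in> D"
      then obtain j' where "j = Suc j'" "(i,j') \<in> D" by blast
      then show False using std_row[OF T, of i j'] std_val[OF T, of "(i,j')"] y yij by auto
    qed
  qed
  then show ?thesis using y by simp
qed

lemma top_at:
  assumes T: "T \<in> std_tableaux D" and fin: "finite D" and bD: "b \<in> D"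
    and succ: "\<And>i j. (i,j) \<in> D \<Longrightarrow> (i,j) \<noteq> b \<Longrightarrow> (Suc i, j) \<in> D \<or> (i, Suc j) \<in> D"
  shows "T b = card D"
proof -
  have "card D \<ge> 1" using fin bD by (metis One_nat_def Suc_leI card_gt_0_iff empty_iff)
  then obtain y where y: "y \<in> D" "T y = card D" using std_surj[OF T, of "card D"] by auto
  obtain i j where yij: "y = (i,j)" by (cases y)
  have "y = b"
  proof (rule ccontr)
    assume ne: "y \<noteq> b"
    from succ[OF y(1)[unfolded yij] ne[unfolded yij]]
    show False
    proof
      assume "(Suc i, j) \<in> D"
      then show False using std_col[OF T, of i j] std_val[OF T, of "(Suc i,j)"] y yij by auto
    next
      assume "(i, Suc j) \<in> D"
      then show False using std_row[OF T, of i j] std_val[OF T, of "(i, Suc j)"] y yij by auto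
    qed
  qed
  then show ?thesis using y by simp
qed

lemma rect_mem: "(i,j) \<in> young_diagram (replicate m n) \<longleftrightarrow> 1 \<le> i \<and> i \<le> m \<and> 1 \<le> j \<and> j \<le> n"
  unfolding young_diagram_def by auto

lemma partA:
  assumes m: "1 \<le> m" and c: "1 \<le> c" "c \<le> n - 1"
  shows "card (adj_in_column (young_diagram (replicate m n)) c) = f_count (replicate m n)"
proof -
  define D where "D = young_diagram (replicate m n)"
  have mem: "(i,j) \<in> D \<longleftrightarrow> 1 \<le> i \<and> i \<le> m \<and> 1 \<le> j \<and> j \<le> n" for i j
    unfolding D_def by (rule rect_mem)
  have n: "2 \<le> n" using c by auto
  have fin: "finite D"
  proof (rule finite_subset)
    show "D \<subseteq> {1..m} \<times> {1..n}" using mem by auto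
  qed auto
  have a: "(1,1) \<in> D" using mem m n by auto
  have bD: "(m,n) \<in> D" using mem m n by auto
  have one: "T (1,1) = 1" if "T \<in> std_tableaux D" for T
  proof (rule one_at[OF that fin a])
    fix i j assume ij: "(i,j) \<in> D" "(i,j) \<noteq> (1,1)"
    show "(\<exists>i'. i = Suc i' \<and> (i',j) \<in> D) \<or> (\<exists>j'. j = Suc j' \<and> (i,j') \<in> D)"
    proof (cases "i \<ge> 2")
      case True
      then show ?thesis using ij mem by (intro disjI1 exI[of _ "i - 1"]) auto
    next
      case False
      then show ?thesis using ij mem by (intro disjI2 exI[of _ "j - 1"]) auto
    qed
  qed
  have top: "T (m,n) = card D" if "T \<in> std_tableaux D" for T
  proof (rule top_at[OF that fin bD])
    fix i j assume ij: "(i,j) \<in> D" "(i,j) \<noteq> (m,n)"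
    show "(Suc i, j) \<in> D \<or> (i, Suc j) \<in> D" using ij mem by auto
  qed
  have sub: "\<And>i j. (i,j) \<in> D \<Longrightarrow> 1 \<le> i \<and> i \<le> m \<and> 1 \<le> j" using mem by blast
  have "card (adj_in_column D c) = card (std_tableaux D)"
    by (rule generic[where D=D and R=m and b="(m,n)"]; (fact fin sub a bD one top)?) (use c in auto)
  then show ?thesis unfolding D_def f_count_def .
qed


lemma shifted_mem:
  assumes L: "\<forall>i. 1 \<le> i \<and> i \<le> length lam \<longrightarrow> lam ! (i - 1) = lam ! 0 - i + 1"
    and le: "length lam \<le> lam ! 0"
  shows "(i,j) \<in> shifted_diagram lam \<longleftrightarrow> 1 \<le> i \<and> i \<le> length lam \<and> i \<le> j \<and> j \<le> lam ! 0"
proof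
  assume "(i,j) \<in> shifted_diagram lam"
  then obtain i' j' where e: "(i,j) = (i', j' + i' - 1)" and h: "1 \<le> i'" "i' \<le> length lam" "1 \<le> j'" "j' \<le> lam ! (i' - 1)"
    unfolding shifted_diagram_def by blast
  have "lam ! (i' - 1) = lam ! 0 - i' + 1" using L h by blast
  then show "1 \<le> i \<and> i \<le> length lam \<and> i \<le> j \<and> j \<le> lam ! 0" using e h le by auto
next
  assume h: "1 \<le> i \<and> i \<le> length lam \<and> i \<le> j \<and> j \<le> lam ! 0"
  have "lam ! (i - 1) = lam ! 0 - i + 1" using L h by blast
  then have "(i,j) = (i, (j - i + 1) + i - 1) \<and> 1 \<le> i \<and> i \<le> length lam \<and> 1 \<le> j - i + 1 \<and> j - i + 1 \<le> lam ! (i - 1)"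
    using h by auto
  then show "(i,j) \<in> shifted_diagram lam" unfolding shifted_diagram_def by blast
qed

lemma len_le:
  assumes sp: "strict_partition lam" and ne: "lam \<noteq> []"
    and L: "\<forall>i. 1 \<le> i \<and> i \<le> length lam \<longrightarrow> lam ! (i - 1) = lam ! 0 - i + 1"
  shows "length lam \<le> lam ! 0"
proof (rule ccontr)
  define K where "K = lam ! 0"
  assume "\<not> length lam \<le> lam ! 0"
  then have lt: "K + 1 \<le> length lam" unfolding K_def by auto
  have "K > 0" using sp ne unfolding strict_partition_def K_def by auto
  have a1: "lam ! (K - 1) = 1" using L[rule_format, of K] lt \<open>K > 0\<close> unfolding K_def by auto
  have a2: "lam ! K = 1" using L[rule_format, of "K+1"] lt unfolding K_def by auto
  have "lam ! (K - 1) > lam ! K"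
    using sp lt \<open>K > 0\<close> unfolding strict_partition_def sorted_wrt_iff_nth_less by auto
  then show False using a1 a2 by simp
qed

lemma partB:
  assumes sp: "strict_partition lam" and ne: "lam \<noteq> []"
    and L: "\<forall>i. 1 \<le> i \<and> i \<le> length lam \<longrightarrow> lam ! (i - 1) = lam ! 0 - i + 1"
    and c: "1 \<le> c" "c \<le> lam ! 0 - 1"
  shows "card (adj_in_column (shifted_diagram lam) c) = g_count lam"
proof -
  define D where "D = shifted_diagram lam"
  define K where "K = lam ! 0"
  define l where "l = length lam"
  have le: "l \<le> K" using len_le[OF sp ne L] unfolding l_def K_def .
  have mem: "(i,j) \<in> D \<longleftrightarrow> 1 \<le> i \<and> i \<le> l \<and> i \<le> j \<and> j \<le> K" for i j
    unfolding D_def l_def K_def by (rule shifted_mem[OF L le[unfolded l_def K_def]])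
  have l1: "1 \<le> l" using ne unfolding l_def by (cases lam) auto
  have K2: "2 \<le> K" using c unfolding K_def by auto
  have fin: "finite D"
  proof (rule finite_subset)
    show "D \<subseteq> {1..l} \<times> {1..K}" using mem by auto
  qed auto
  have a: "(1,1) \<in> D" using mem l1 K2 by auto
  have bD: "(l,K) \<in> D" using mem l1 le by auto
  have one: "T (1,1) = 1" if "T \<in> std_tableaux D" for T
  proof (rule one_at[OF that fin a])
    fix i j assume ij: "(i,j) \<in> D" "(i,j) \<noteq> (1,1)"
    show "(\<exists>i'. i = Suc i' \<and> (i',j) \<in> D) \<or> (\<exists>j'. j = Suc j' \<and> (i,j') \<in> D)"
    proof (cases "i \<ge> 2")
      case True
      then show ?thesis using ij mem by (intro disjI1 exI[of _ "i - 1"]) auto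
    next
      case False
      then show ?thesis using ij mem by (intro disjI2 exI[of _ "j - 1"]) auto
    qed
  qed
  have top: "T (l,K) = card D" if "T \<in> std_tableaux D" for T
  proof (rule top_at[OF that fin bD])
    fix i j assume ij: "(i,j) \<in> D" "(i,j) \<noteq> (l,K)"
    show "(Suc i, j) \<in> D \<or> (i, Suc j) \<in> D" using ij mem le by auto
  qed
  have sub: "\<And>i j. (i,j) \<in> D \<Longrightarrow> 1 \<le> i \<and> i \<le> l \<and> 1 \<le> j" using mem by fastforce
  have "card (adj_in_column D c) = card (std_tableaux D)"
    by (rule generic[where D=D and R=l and b="(l,K)"]; (fact fin sub a bD one top)?) (use c K_def in auto)
  then show ?thesis unfolding D_def g_count_def .
qed

theorem mainTheorem15:
  shows "(\<forall>n m c. 1 \<le> m \<and> 1 \<le> c \<and> c \<le> n - 1 \<longrightarrow>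
            card (adj_in_column (young_diagram (replicate m n)) c) = f_count (replicate m n))
       \<and> (\<forall>lam c. strict_partition lam \<and> lam \<noteq> [] \<and>
            (\<forall>i. 1 \<le> i \<and> i \<le> length lam \<longrightarrow> lam ! (i - 1) = lam ! 0 - i + 1) \<and>
            1 \<le> c \<and> c \<le> lam ! 0 - 1 \<longrightarrow>
            card (adj_in_column (shifted_diagram lam) c) = g_count lam)"
  using partA partB by blast

end
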